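(* For all integers $k$ and $m$ with $k \geq m \geq 0$, \[ \sum_{n=0}^{m} \binom{m}{n} \binom{k+n}{m} \binom{k+m+n}{m+n}^{-1} \frac{2n + k + 1}{m + n + k + 1} = 1 . \]
   Context: $\binom{a}{b}$ denotes the usual binomial coefficient $\frac{a!}{b!\,(a-b)!}$ for integers $0\le b\le a$. *)

theory Defs
  imports Complex_Main
begin

end

theory Submission
  imports Defs
begin

lemma choose_succ_ratio: "(x choose Suc j) * Suc j = (x choose j) * (x - j)"
proof (cases x)
  case 0 then show ?thesis by simp
next
  case (Suc y)
  have "(x - j) * (x choose j) = x * ((x - 1) choose j)" by (rule binomial_absorb_comp)
  moreover have "Suc j * (x choose Suc j) = x * ((x - 1) choose j)" by (rule binomial_absorption)
  ultimately show ?thesis by (simp add: mult.commute)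
qed

lemma choose_succ_ratio_real:
  "real (x choose Suc j) * (real j + 1) = real (x choose j) * (real x - real j)" if "j \<le> x"
proof -
  have "real ((x choose Suc j) * Suc j) = real ((x choose j) * (x - j))"
    using choose_succ_ratio by metis
  then show ?thesis using that by (simp add: of_nat_diff algebra_simps)
qed

lemma choose_absorb_real:
  "real (m choose n) * (real m + 1) = real (Suc m choose n) * (real m + 1 - real n)" if "n \<le> Suc m"
proof -
  have "(Suc m - n) * (Suc m choose n) = Suc m * (m choose n)"
    using binomial_absorb_comp[of "Suc m" n] by simp
  then have "real ((Suc m - n) * (Suc m choose n)) = real (Suc m * (m choose n))" by metis
  moreover have "real (Suc m - n) = real m + 1 - real n" using that by (simp add: of_nat_diff)
  ultimately show ?thesis by (simp only: of_nat_mult) (simp add: algebra_simps)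
qed

lemma choose_Suc_Suc_real:
  "real (Suc x choose Suc j) * (real j + 1) = (real x + 1) * real (x choose j)"
proof -
  have "real (Suc j * (Suc x choose Suc j)) = real (Suc x * (x choose j))"
    using Suc_times_binomial by metis
  then show ?thesis by (simp add: algebra_simps)
qed

lemma alg1:
  fixes a b c u v w r t q N :: real
  assumes "N > 0" "q > 0" "w > 0" "r > 0" "t > 0" "c > 0"
  shows "- 2 * N * (a * u / N) * (v * b / q) / ((c * w / r) * t)
       = - a * b / c * (2 * u * v * r / (q * w * t))"
  using assms by (simp add: field_simps)

lemma alg2:
  fixes a b c u w q z :: real
  assumes "q > 0" "w > 0" "c > 0"
  shows "- 2 * z * a * (b * u / q) / (c * w)
       = - a * b / c * (2 * z * u / (q * w))"
  using assms by (simp add: field_simps)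

lemma keyAB:
  fixes A B z :: real
  assumes "A > 0" "B > 0"
  shows "(B - 2 * A + 1) / A * (A + z) / B * (B - A + z + 1) / (B + 1) - (A - z) / A * (B - A + z + 1) / B
     = - (2 * (A - z) * (B - A + 1) * (A + z)) / (A * B * (B + 1)) + 2 * z * (B - 2 * A + 1) / (A * B)"
proof -
  have p: "B + 1 > 0" using assms by auto
  have l: "(B - 2 * A + 1) / A * (A + z) / B * (B - A + z + 1) / (B + 1) - (A - z) / A * (B - A + z + 1) / B
     = ((B - 2*A + 1) * (A + z) * (B - A + z + 1) - (A - z) * (B - A + z + 1) * (B + 1)) / (A * B * (B + 1))"
    using assms p by (simp add: divide_simps)
  have r: "- (2 * (A - z) * (B - A + 1) * (A + z)) / (A * B * (B + 1)) + 2 * z * (B - 2 * A + 1) / (A * B)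
     = (- 2 * (A - z) * (B - A + 1) * (A + z) + 2 * z * (B - 2 * A + 1) * (B + 1)) / (A * B * (B + 1))"
    using assms p by (simp add: divide_simps) (simp add: algebra_simps)
  have n: "(B - 2*A + 1) * (A + z) * (B - A + z + 1) - (A - z) * (B - A + z + 1) * (B + 1)
     = - 2 * (A - z) * (B - A + 1) * (A + z) + 2 * z * (B - 2 * A + 1) * (B + 1)"
    by (simp add: algebra_simps)
  show ?thesis unfolding l r n ..
qed

lemma alg3:
  fixes a b c Y1 Y2 :: real
  shows "a * b / c * (- Y1 + Y2) = - a * b / c * Y1 - - a * b / c * Y2"
  by (simp add: algebra_simps diff_divide_distrib)

definition TT :: "nat \<Rightarrow> nat \<Rightarrow> nat \<Rightarrow> real" where
  "TT k m n = real (m choose n) * real ((k + n) choose m)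
            / real ((k + m + n) choose (m + n))
            * (real (2 * n + k + 1) / real (m + n + k + 1))"

definition GG :: "nat \<Rightarrow> nat \<Rightarrow> nat \<Rightarrow> real" where
  "GG k m n = - 2 * real n * real (Suc m choose n) * real ((k + n) choose Suc m)
     / (real ((k + m + n) choose (m + n)) * (real k + real m + real n + 1))"

lemma step:
  assumes "Suc m \<le> k" "n \<le> Suc m"
  shows "TT k (Suc m) n - TT k m n = GG k m (Suc n) - GG k m n"
proof -
  define a where "a = real (Suc m choose n)"
  define b where "b = real ((k + n) choose m)"
  define c where "c = real ((k + m + n) choose (m + n))"
  have a0: "a > 0" unfolding a_def using assms by simp
  have b0: "b > 0" unfolding b_def using assms by simp
  have c0: "c > 0" unfolding c_def by simp
  have e1: "real (m choose n) = a * (real m + 1 - real n) / (real m + 1)"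
    using choose_absorb_real[OF assms(2)] unfolding a_def by (simp add: field_simps)
  have e2: "real ((k + n) choose Suc m) = b * (real k + real n - real m) / (real m + 1)"
    using choose_succ_ratio_real[of m "k+n"] assms unfolding b_def by (simp add: field_simps)
  have e3: "real ((k + Suc m + n) choose (Suc m + n)) = c * (real k + real m + real n + 1) / (real m + real n + 1)"
    using choose_Suc_Suc_real[of "k+m+n" "m+n"] unfolding c_def by (simp add: field_simps)
  have e4: "real (Suc m choose Suc n) = a * (real m + 1 - real n) / (real n + 1)"
    using choose_succ_ratio_real[of n "Suc m"] assms unfolding a_def by (simp add: field_simps)
  have e5: "real ((k + Suc n) choose Suc m) = (real k + real n + 1) * b / (real m + 1)"
    using choose_Suc_Suc_real[of "k+n" m] unfolding b_def by (simp add: field_simps)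
  have e6: "real ((k + m + Suc n) choose (m + Suc n)) = c * (real k + real m + real n + 1) / (real m + real n + 1)"
    using choose_Suc_Suc_real[of "k+m+n" "m+n"] unfolding c_def by (simp add: field_simps)
  have L1: "TT k (Suc m) n = a * b / c * ((real k + real n - real m) / (real m + 1) * (real m + real n + 1) / (real k + real m + real n + 1)
        * (2 * real n + real k + 1) / (real m + real n + real k + 2))"
    unfolding TT_def e2 e3 a_def[symmetric] b_def[symmetric] c_def[symmetric]
    using a0 b0 c0 by (simp add: field_simps)
  have L2: "TT k m n = a * b / c * ((real m + 1 - real n) / (real m + 1) * (2 * real n + real k + 1) / (real m + real n + real k + 1))"
    unfolding TT_def e1 a_def[symmetric] b_def[symmetric] c_def[symmetric]
    using a0 b0 c0 by (simp add: field_simps)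
  have L: "TT k (Suc m) n - TT k m n =
     a * b / c * ((real k + real n - real m) / (real m + 1) * (real m + real n + 1) / (real k + real m + real n + 1)
        * (2 * real n + real k + 1) / (real m + real n + real k + 2)
      - (real m + 1 - real n) / (real m + 1) * (2 * real n + real k + 1) / (real m + real n + real k + 1))"
    unfolding L1 L2 by (simp add: right_diff_distrib)
  have R1: "GG k m (Suc n) = - a * b / c * (2 * (real m + 1 - real n) * (real k + real n + 1) * (real m + real n + 1)
        / ((real m + 1) * (real k + real m + real n + 1) * (real k + real m + real n + 2)))"
  proof -
    have "GG k m (Suc n) = - 2 * (real n + 1) * real (Suc m choose Suc n) * real ((k + Suc n) choose Suc m)
     / (real ((k + m + Suc n) choose (m + Suc n)) * (real k + real m + real n + 2))"
      unfolding GG_def by (simp del: binomial_Suc_Suc add: algebra_simps)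
    also have "\<dots> = - 2 * (real n + 1) * (a * (real m + 1 - real n) / (real n + 1)) * ((real k + real n + 1) * b / (real m + 1))
     / ((c * (real k + real m + real n + 1) / (real m + real n + 1)) * (real k + real m + real n + 2))"
      unfolding e4 e5 e6 ..
    also have "\<dots> = - a * b / c * (2 * (real m + 1 - real n) * (real k + real n + 1) * (real m + real n + 1)
        / ((real m + 1) * (real k + real m + real n + 1) * (real k + real m + real n + 2)))"
      by (rule alg1) (use c0 in auto)
    finally show ?thesis .
  qed
  have R2: "GG k m n = - a * b / c * (2 * real n * (real k + real n - real m) / ((real m + 1) * (real k + real m + real n + 1)))"
    unfolding GG_def e2 a_def[symmetric] b_def[symmetric] c_def[symmetric]
    by (rule alg2) (use c0 in auto)
  define x where "x = real k"
  define y where "y = real m"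
  define z where "z = real n"
  have x0: "x \<ge> 0" "y \<ge> 0" "z \<ge> 0" unfolding x_def y_def z_def by auto
  have key: "((x + z - y) / (y + 1) * (y + z + 1) / (x + y + z + 1)
        * (2 * z + x + 1) / (y + z + x + 2)
      - (y + 1 - z) / (y + 1) * (2 * z + x + 1) / (y + z + x + 1))
     = - (2 * (y + 1 - z) * (x + z + 1) * (y + z + 1)
        / ((y + 1) * (x + y + z + 1) * (x + y + z + 2)))
      + (2 * z * (x + z - y) / ((y + 1) * (x + y + z + 1)))"
  proof -
    define A where "A = y + 1"
    define B where "B = x + y + z + 1"
    have AB: "A > 0" "B > 0" unfolding A_def B_def using x0 by auto
    have eqs: "x + z - y = B - 2*A + 1" "y+z+1 = A+z" "2*z+x+1 = B - A + z + 1" "y+z+x+2 = B+1"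
      "y+z+x+1 = B" "y+1-z = A - z" "x+z+1 = B-A+1" "x+y+z+2 = B+1" "x + y + z + 1 = B" "y + 1 = A"
      unfolding A_def B_def by auto
    show ?thesis unfolding eqs using keyAB[OF AB, of z] by simp
  qed
  note key' = key[unfolded x_def y_def z_def]
  show ?thesis unfolding L R1 R2 key' by (rule alg3)
qed

lemma sum_TT: "m \<le> k \<Longrightarrow> (\<Sum>n = 0..m. TT k m n) = 1"
proof (induction m)
  case 0
  then show ?case unfolding TT_def by simp
next
  case (Suc m)
  then have IH: "(\<Sum>n = 0..m. TT k m n) = 1" by simp
  have z1: "TT k m (Suc m) = 0" unfolding TT_def by simp
  have s1: "(\<Sum>n = 0..Suc m. TT k m n) = 1" using IH z1 by simp
  have "(\<Sum>n = 0..Suc m. TT k (Suc m) n) - (\<Sum>n = 0..Suc m. TT k m n)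
      = (\<Sum>n = 0..Suc m. TT k (Suc m) n - TT k m n)"
    by (simp add: sum_subtractf)
  also have "\<dots> = (\<Sum>n = 0..Suc m. GG k m (Suc n) - GG k m n)"
    by (rule sum.cong) (use step Suc.prems in auto)
  also have "\<dots> = GG k m (Suc (Suc m)) - GG k m 0"
    by (rule sum_Suc_diff) simp
  also have "\<dots> = 0" unfolding GG_def by (simp del: binomial_Suc_Suc)
  finally show ?case using s1 by simp
qed

theorem mainTheorem1:
  fixes k m :: nat
  assumes "m \<le> k"
  shows "(\<Sum>n = 0..m. real (m choose n) * real ((k + n) choose m)
            / real ((k + m + n) choose (m + n))
            * (real (2 * n + k + 1) / real (m + n + k + 1))) = 1"
  using sum_TT[OF assms] unfolding TT_def .

end
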